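(* Let $q$ be an odd positive integer, let $\omega_q = e^{\mathrm{i}2\pi/q}$, and let $m < q$ be a positive integer. Let $\mathbf{V}$ be the $m\times m$ Vandermonde matrix with $\mathbf{V}(i,j) = s_j^{\,i}$ for $i,j\in\{0,\dots,m-1\}$, where $s_0,\dots,s_{m-1}$ are distinct elements of $\{1,\omega_q,\omega_q^2,\dots,\omega_q^{q-1}\}$. Then, with $c_1 = 5.5$, $$\kappa(\mathbf{V}) \le O\!\left(q^{\,q-m+c_1}\right),$$ i.e. there is an absolute constant $C$ (independent of $q$, $m$ and the choice of the $s_j$) such that $\kappa(\mathbf{V}) \le C\, q^{\,q-m+5.5}$.
   Context: For a square matrix $\mathbf{M}$, $\|\mathbf{M}\|$ denotes its largest singular value and the condition number is $\kappa(\mathbf{M}) = \|\mathbf{M}\|\,\|\mathbf{M}^{-1}\|$ (infinite if $\mathbf{M}$ is singular). $\mathrm{i}=\sqrt{-1}$. *)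

theory Defs
  imports Complex_Main "HOL-Library.Extended_Real" "Jordan_Normal_Form.Matrix"
begin

definition vec_2norm :: "complex vec \<Rightarrow> real" where
  "vec_2norm v = sqrt (\<Sum>i<dim_vec v. (cmod (v $ i))^2)"

text \<open>Spectral norm = largest singular value = operator norm induced by the 2-norm.\<close>
definition spec_norm :: "complex mat \<Rightarrow> real" where
  "spec_norm A = Sup {vec_2norm (A *\<^sub>v v) | v. v \<in> carrier_vec (dim_col A) \<and> vec_2norm v \<le> 1}"

definition cond_num :: "complex mat \<Rightarrow> ereal" where
  "cond_num A = (if invertible_mat A
     then ereal (spec_norm A * spec_norm (THE B. B \<in> carrier_mat (dim_row A) (dim_row A)
                                             \<and> inverts_mat A B \<and> inverts_mat B A))
     else \<infinity>)"

definition omega :: "nat \<Rightarrow> complex" where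
  "omega q = exp (\<i> * 2 * pi / of_nat q)"

definition vandermonde :: "nat \<Rightarrow> (nat \<Rightarrow> complex) \<Rightarrow> complex mat" where
  "vandermonde m s = mat m m (\<lambda>(i,j). s j ^ i)"

end

theory Submission
  imports Defs "Jordan_Normal_Form.Determinant"
begin


declare complex_cnj_power[simp del]

lemma omega_pow: "omega q ^ k = cis (2 * pi * real k / real q)"
  unfolding omega_def
  by (simp add: cis_conv_exp exp_of_nat_mult[symmetric] algebra_simps)

lemma sin_lower_cubic: "x - x^3/6 \<le> sin (x::real)" if "0 \<le> x"
proof -
  have "\<bar>sin x - (\<Sum>m<3. sin_coeff m * x ^ m)\<bar> \<le> inverse (fact 3) * \<bar>x\<bar> ^ 3"
    by (rule Maclaurin_sin_bound)
  moreover have "(\<Sum>m<3. sin_coeff m * x ^ m) = x"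
    by (simp add: numeral_3_eq_3 sin_coeff_def)
  ultimately have "\<bar>sin x - x\<bar> * 6 \<le> x^3" using that by (simp add: fact_numeral)
  hence "x - sin x \<le> x^3/6" using abs_ge_minus_self[of "sin x - x"] by simp
  thus ?thesis by simp
qed

lemma sin_pi_over_q: "1 / real q \<le> sin (pi / real q)" if "q \<ge> 2"
proof (cases "q = 2")
  case True then show ?thesis by simp
next
  case False
  hence q3: "real q \<ge> 3" using that by simp
  define z where "z = pi / real q"
  have z0: "0 \<le> z" unfolding z_def by simp
  have "z \<le> 4 / 3" unfolding z_def using pi_less_4 q3
    by (simp add: divide_simps) 
  hence "z^2 \<le> (4/3)^2" using z0 by (intro power_mono) auto
  moreover have "(4/3::real)^2 \<le> 3" by (simp add: power2_eq_square)
  ultimately have "z^2 \<le> 3" by linarith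
  hence "z / 2 \<le> z - z^3/6" using z0 proof -
    have "z * z^2 \<le> z * 3" using mult_left_mono[OF \<open>z^2 \<le> 3\<close> z0] .
    thus ?thesis by (simp add: power3_eq_cube power2_eq_square)
  qed
  also have "\<dots> \<le> sin z" by (rule sin_lower_cubic[OF z0])
  finally have "z/2 \<le> sin z" .
  moreover have "1 / real q \<le> z / 2" unfolding z_def using pi_ge_two q3 by (simp add: divide_simps)
  ultimately show ?thesis unfolding z_def by linarith
qed

lemma sin_k_over_q: "1 / real q \<le> sin (pi * real k / real q)" if "q \<ge> 2" "0 < k" "k < q"
proof -
  define k' where "k' = (if 2 * k \<le> q then k else q - k)"
  have k'1: "1 \<le> k'" and k'2: "2 * k' \<le> q" using that unfolding k'_def by auto
  have eq: "sin (pi * real k / real q) = sin (pi * real k' / real q)"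
  proof (cases "2 * k \<le> q")
    case False
    hence "pi * real k' / real q = pi - pi * real k / real q"
      using that unfolding k'_def by (simp add: of_nat_diff field_simps)
    then show ?thesis by simp
  qed (simp add: k'_def)
  have q0: "real q > 0" using that by simp
  have a1: "pi / real q \<le> pi * real k' / real q"
    using k'1 q0 by (simp add: divide_right_mono)
  have a2: "pi * real k' / real q \<le> pi / 2"
  proof -
    have "2 * real k' \<le> real q" using k'2 by linarith
    thus ?thesis using q0 by (simp add: field_simps)
  qed
  have a0: "0 \<le> pi / real q" by simp
  have "sin (pi / real q) \<le> sin (pi * real k' / real q)"
  proof -
    have b1: "-(pi/2) \<le> pi / real q" using a0 pi_gt_zero by linarith
    have b2: "pi / real q \<le> pi/2" using a1 a2 by linarith
    have b3: "-(pi/2) \<le> pi * real k' / real q" using a0 a1 pi_gt_zero by linarith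
    show ?thesis using sin_mono_le_eq[OF b1 b2 b3 a2] a1 by blast
  qed
  thus ?thesis using sin_pi_over_q[OF that(1)] eq by linarith
qed

lemma chord: "2 / real q \<le> cmod (1 - omega q ^ k)" if "q \<ge> 2" "0 < k" "k < q"
proof -
  define y where "y = pi * real k / real q"
  have "omega q ^ k = cis (2 * y)" unfolding omega_pow y_def by (simp add: field_simps)
  hence "(cmod (1 - omega q ^ k))^2 = (1 - cos (2*y))^2 + (sin (2*y))^2"
    by (simp add: cmod_power2)
  also have "\<dots> = 2 - 2 * cos (2*y)"
    using sin_cos_squared_add[of "2*y"] by (simp add: power2_eq_square algebra_simps)
  also have "\<dots> = (2 * sin y)^2" by (simp add: cos_double_sin power2_eq_square)
  finally have sq: "(cmod (1 - omega q ^ k))^2 = (2 * sin y)^2" .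
  have sy: "1 / real q \<le> sin y" unfolding y_def by (rule sin_k_over_q[OF that])
  have "0 < 1 / real q" using that by simp
  hence "2 / real q \<le> 2 * sin y" using sy by simp
  also have "2 * sin y = cmod (1 - omega q ^ k)"
    using sq sy \<open>0 < 1 / real q\<close>
    by (metis norm_ge_zero power2_eq_imp_eq less_le_trans mult_nonneg_nonneg zero_le_numeral less_imp_le)
  finally show ?thesis .
qed

lemma norm_omega_pow [simp]: "cmod (omega q ^ k) = 1"
  by (simp add: omega_pow)

lemma omega_pow_q: "omega q ^ q = 1" if "q > 0"
  using that by (simp add: omega_pow)

lemma omega_nonzero [simp]: "omega q ^ k \<noteq> 0"
  using norm_omega_pow[of q k] by (metis norm_zero zero_neq_one)

lemma cnj_omega_pow: "cnj (omega q ^ k) = inverse (omega q ^ k)"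
proof -
  have h: "omega q ^ k * cnj (omega q ^ k) = 1"
    using complex_norm_square[of "omega q ^ k"] by simp
  show ?thesis using inverse_unique[OF h] by (rule sym)
qed

lemma omega_dist: "2 / real q \<le> cmod (omega q ^ a - omega q ^ b)"
  if "q \<ge> 2" "a < q" "b < q" "a \<noteq> b"
proof -
  have *: "2 / real q \<le> cmod (omega q ^ a - omega q ^ b)" if "a < b" "b < q" for a b
  proof -
    have "omega q ^ a - omega q ^ b = omega q ^ a * (1 - omega q ^ (b - a))"
      using that by (simp add: algebra_simps power_add[symmetric])
    hence "cmod (omega q ^ a - omega q ^ b) = cmod (1 - omega q ^ (b - a))"
      by (simp add: norm_mult)
    thus ?thesis using chord[of q "b - a"] that \<open>q \<ge> 2\<close> by simp
  qed
  show ?thesis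
  proof (cases "a < b")
    case True thus ?thesis using * that by simp
  next
    case False
    hence "b < a" using that by simp
    thus ?thesis using *[of b a] that by (simp add: norm_minus_commute)
  qed
qed

lemma omega_inj: "omega q ^ a \<noteq> omega q ^ b" if "q \<ge> 2" "a < q" "b < q" "a \<noteq> b"
  using omega_dist[OF that] that by auto

lemma orth: "(\<Sum>i<q. omega q ^ (a * i) * cnj (omega q ^ (b * i))) = (if a = b then of_nat q else 0)"
  if "q \<ge> 2" "a < q" "b < q"
proof -
  define z where "z = omega q ^ a / omega q ^ b"
  have t: "omega q ^ (a * i) * cnj (omega q ^ (b * i)) = z ^ i" for i
  proof -
    have "omega q ^ (a * i) * cnj (omega q ^ (b * i)) = omega q ^ (a*i) * inverse (omega q ^ (b*i))"
      by (simp only: cnj_omega_pow)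
    also have "\<dots> = z ^ i" by (simp only: z_def divide_inverse power_mult_distrib power_inverse power_mult)
    finally show ?thesis .
  qed
  show ?thesis
  proof (cases "a = b")
    case True
    hence "z = 1" using omega_nonzero[of q b] by (simp add: z_def)
    thus ?thesis unfolding t using True by simp
  next
    case False
    have "z \<noteq> 1" using omega_inj[OF that False] by (simp add: z_def)
    moreover have "z ^ q = 1"
    proof -
      have h: "(omega q ^ c) ^ q = 1" for c
        using omega_pow_q[of q] that by (metis power_mult mult.commute power_one gr0I not_numeral_le_zero)
      show ?thesis by (simp add: z_def power_divide h)
    qed
    ultimately show ?thesis using False unfolding t by (simp add: geometric_sum)
  qed
qed



definition DFT :: "nat \<Rightarrow> (nat \<Rightarrow> complex) \<Rightarrow> nat \<Rightarrow> complex" where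
  "DFT q x i = (\<Sum>t<q. x t * omega q ^ (t * i))"

lemma DFT_inv: "(\<Sum>i<q. DFT q x i * cnj (omega q ^ (u * i))) = of_nat q * x u"
  if "q \<ge> 2" "u < q"
proof -
  have "(\<Sum>i<q. DFT q x i * cnj (omega q ^ (u * i)))
      = (\<Sum>i<q. \<Sum>t<q. x t * (omega q ^ (t * i) * cnj (omega q ^ (u * i))))"
    unfolding DFT_def by (simp add: sum_distrib_right mult.assoc)
  also have "\<dots> = (\<Sum>t<q. x t * (\<Sum>i<q. omega q ^ (t * i) * cnj (omega q ^ (u * i))))"
    by (subst sum.swap) (simp add: sum_distrib_left)
  also have "\<dots> = (\<Sum>t<q. x t * (if t = u then of_nat q else 0))"
    by (intro sum.cong refl) (simp add: orth[OF that(1) _ that(2)])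
  also have "\<dots> = of_nat q * x u" using that by (simp add: if_distrib cong: if_cong)
  finally show ?thesis .
qed

lemma parseval: "(\<Sum>i<q. (cmod (DFT q x i))^2) = real q * (\<Sum>t<q. (cmod (x t))^2)"
  if "q \<ge> 2"
proof -
  have "complex_of_real (\<Sum>i<q. (cmod (DFT q x i))^2) = (\<Sum>i<q. DFT q x i * cnj (DFT q x i))"
    by (subst of_real_sum) (simp only: complex_norm_square)
  also have "\<dots> = (\<Sum>i<q. \<Sum>t<q. \<Sum>s<q. x t * cnj (x s) * (omega q ^ (t * i) * cnj (omega q ^ (s * i))))"
  proof (intro sum.cong refl)
    fix i
    have "DFT q x i * cnj (DFT q x i) = (\<Sum>t<q. x t * omega q ^ (t * i)) * (\<Sum>s<q. cnj (x s) * cnj (omega q ^ (s * i)))"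
      unfolding DFT_def cnj_sum complex_cnj_mult ..
    also have "\<dots> = (\<Sum>t<q. \<Sum>s<q. (x t * omega q ^ (t * i)) * (cnj (x s) * cnj (omega q ^ (s * i))))"
      by (rule sum_product)
    also have "\<dots> = (\<Sum>t<q. \<Sum>s<q. x t * cnj (x s) * (omega q ^ (t * i) * cnj (omega q ^ (s * i))))"
      by (simp only: mult_ac)
    finally show "DFT q x i * cnj (DFT q x i) = (\<Sum>t<q. \<Sum>s<q. x t * cnj (x s) * (omega q ^ (t * i) * cnj (omega q ^ (s * i))))" .
  qed
  also have "\<dots> = (\<Sum>t<q. \<Sum>i<q. \<Sum>s<q. x t * cnj (x s) * (omega q ^ (t * i) * cnj (omega q ^ (s * i))))"
    by (rule sum.swap)
  also have "\<dots> = (\<Sum>t<q. \<Sum>s<q. \<Sum>i<q. x t * cnj (x s) * (omega q ^ (t * i) * cnj (omega q ^ (s * i))))"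
    by (rule sum.cong[OF refl], rule sum.swap)
  also have "\<dots> = (\<Sum>t<q. \<Sum>s<q. x t * cnj (x s) * (\<Sum>i<q. omega q ^ (t * i) * cnj (omega q ^ (s * i))))"
    by (simp only: sum_distrib_left)
  also have "\<dots> = (\<Sum>t<q. \<Sum>s<q. x t * cnj (x s) * (if t = s then of_nat q else 0))"
    by (intro sum.cong refl) (simp add: orth[OF that])
  also have "\<dots> = (\<Sum>t<q. of_nat q * (x t * cnj (x t)))"
    by (simp add: if_distrib mult.commute cong: if_cong)
  also have "\<dots> = complex_of_real (real q * (\<Sum>t<q. (cmod (x t))^2))"
    by (simp add: complex_norm_square[symmetric] sum_distrib_left)
  finally show ?thesis by (simp only: of_real_eq_iff)
qed



lemma coeff_prod_bound:
  fixes r :: "nat \<Rightarrow> complex"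
  assumes "finite S" "\<And>u. u \<in> S \<Longrightarrow> cmod (r u) \<le> 1"
  shows "cmod (coeff (\<Prod>u\<in>S. [:-r u, 1:]) k) \<le> 2 ^ card S"
  using assms
proof (induction S arbitrary: k rule: finite_induct)
  case empty
  then show ?case by (cases k) auto
next
  case (insert x F)
  define p where "p = (\<Prod>u\<in>F. [:-r u, 1:])"
  have ih: "cmod (coeff p j) \<le> 2 ^ card F" for j
    unfolding p_def using insert by auto
  have "(\<Prod>u\<in>insert x F. [:-r u, 1:]) = smult (- r x) p + pCons 0 p"
    using insert(1,2) by (simp add: p_def)
  hence c: "coeff (\<Prod>u\<in>insert x F. [:-r u, 1:]) k = - r x * coeff p k + coeff (pCons 0 p) k"
    by simp
  have "cmod (coeff (pCons 0 p) k) \<le> 2 ^ card F"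
    using ih by (cases k) auto
  moreover have "cmod (- r x * coeff p k) \<le> 2 ^ card F"
  proof -
    have "cmod (- r x * coeff p k) = cmod (r x) * cmod (coeff p k)" by (simp add: norm_mult)
    also have "\<dots> \<le> 1 * 2 ^ card F"
      using insert(4)[of x] ih[of k] by (intro mult_mono) auto
    finally show ?thesis by simp
  qed
  ultimately have "cmod (coeff (\<Prod>u\<in>insert x F. [:-r u, 1:]) k) \<le> 2 ^ card F + 2 ^ card F"
    unfolding c by (meson add_mono norm_triangle_le)
  thus ?case using insert(1,2) by simp
qed

lemma interp_bound:
  fixes Z :: "complex poly" and r :: "nat \<Rightarrow> complex" and U :: "nat set"
  assumes fin: "finite U" and d: "card U = d" "d \<ge> 1"
    and deg: "degree Z < d"
    and r1: "\<And>u. u \<in> U \<Longrightarrow> cmod (r u) \<le> 1"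
    and dist: "\<And>u u'. u \<in> U \<Longrightarrow> u' \<in> U \<Longrightarrow> u \<noteq> u' \<Longrightarrow> \<delta> \<le> cmod (r u - r u')"
    and dpos: "\<delta> > 0"
  shows "cmod (coeff Z k) \<le> (\<Sum>u\<in>U. cmod (poly Z (r u))) * (2 / \<delta>) ^ (d - 1)"
proof -
  define b where "b u = poly Z (r u)" for u
  define N where "N u = (\<Prod>u'\<in>U - {u}. [:-r u', 1:])" for u
  define D where "D u = (\<Prod>u'\<in>U - {u}. (r u - r u'))" for u
  define P where "P = (\<Sum>u\<in>U. smult (b u / D u) (N u))"
  have cardU: "card (U - {u}) = d - 1" if "u \<in> U" for u using that fin d by simp
  have Dnz: "D u \<noteq> 0" if "u \<in> U" for u
  proof -
    have "r u - r u' \<noteq> 0" if "u' \<in> U - {u}" for u'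
      using dist[of u u'] dpos that \<open>u \<in> U\<close> by auto
    thus ?thesis unfolding D_def using fin by (subst prod_zero_iff) auto
  qed
  have polyN: "poly (N u) (r w) = (if w = u then D u else 0)" if "u \<in> U" "w \<in> U" for u w
  proof (cases "w = u")
    case True thus ?thesis by (simp add: N_def D_def poly_prod)
  next
    case False
    hence "w \<in> U - {u}" using that by auto
    thus ?thesis using False fin unfolding N_def by (auto simp: poly_prod prod_zero_iff)
  qed
  have polyP: "poly P (r w) = poly Z (r w)" if "w \<in> U" for w
  proof -
    have "poly P (r w) = (\<Sum>u\<in>U. b u / D u * poly (N u) (r w))"
      by (simp add: P_def poly_sum)
    also have "\<dots> = (\<Sum>u\<in>U. if u = w then b w else 0)"
      by (intro sum.cong refl) (use that Dnz in \<open>auto simp: polyN\<close>)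
    also have "\<dots> = b w" using fin that by simp
    finally show ?thesis by (simp add: b_def)
  qed
  have degN: "degree (N u) \<le> d - 1" if "u \<in> U" for u
  proof -
    have "degree (N u) \<le> sum (degree \<circ> (\<lambda>u'. [:-r u', 1:])) (U - {u})"
      unfolding N_def using fin by (intro degree_prod_sum_le) auto
    also have "\<dots> = card (U - {u})" by simp
    finally show ?thesis using cardU[OF that] by simp
  qed
  have degP: "degree P \<le> d - 1"
    unfolding P_def using fin
    by (intro degree_sum_le) (use degN in \<open>auto intro: order.trans[OF degree_smult_le]\<close>)
  have rinj: "inj_on r U"
    using dist dpos by (force simp: inj_on_def)
  have "Z = P"
  proof (rule poly_eqI_degree[of "r ` U"])
    show "\<And>x. x \<in> r ` U \<Longrightarrow> poly Z x = poly P x" using polyP by auto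
    show "degree Z < card (r ` U)" using deg rinj d by (simp add: card_image)
    show "degree P < card (r ` U)" using degP rinj d by (simp add: card_image)
  qed
  hence "coeff Z k = (\<Sum>u\<in>U. b u / D u * coeff (N u) k)"
    by (simp add: P_def coeff_sum)
  hence "cmod (coeff Z k) \<le> (\<Sum>u\<in>U. cmod (b u / D u * coeff (N u) k))"
    by (simp add: norm_sum)
  also have "\<dots> \<le> (\<Sum>u\<in>U. cmod (b u) * (2 / \<delta>) ^ (d - 1))"
  proof (intro sum_mono)
    fix u assume u: "u \<in> U"
    have c1: "cmod (coeff (N u) k) \<le> 2 ^ (d - 1)"
      unfolding N_def using coeff_prod_bound[of "U - {u}" r k] fin r1 cardU[OF u] by auto
    have c2: "\<delta> ^ (d - 1) \<le> cmod (D u)"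
    proof -
      have "\<delta> ^ (d - 1) = (\<Prod>u'\<in>U - {u}. \<delta>)" using cardU[OF u] by simp
      also have "\<dots> \<le> (\<Prod>u'\<in>U - {u}. cmod (r u - r u'))"
        using dist[of u] u dpos by (intro prod_mono) auto
      also have "\<dots> = cmod (D u)" by (simp add: D_def prod_norm)
      finally show ?thesis .
    qed
    have dp: "\<delta> ^ (d - 1) > 0" using dpos by simp
    have "cmod (b u / D u * coeff (N u) k) = cmod (b u) * cmod (coeff (N u) k) / cmod (D u)"
      by (simp add: norm_mult norm_divide)
    also have "\<dots> \<le> cmod (b u) * 2 ^ (d - 1) / \<delta> ^ (d - 1)"
      using c1 c2 dp by (intro frac_le mult_left_mono) auto
    also have "\<dots> = cmod (b u) * (2 / \<delta>) ^ (d - 1)" by (simp add: power_divide)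
    finally show "cmod (b u / D u * coeff (N u) k) \<le> cmod (b u) * (2 / \<delta>) ^ (d - 1)" .
  qed
  also have "\<dots> = (\<Sum>u\<in>U. cmod (poly Z (r u))) * (2 / \<delta>) ^ (d - 1)"
    by (simp add: b_def sum_distrib_right)
  finally show ?thesis .
qed



lemma sum_split_add: fixes m d :: nat shows "(\<Sum>i<m + d. f i) = (\<Sum>i<m. f i) + (\<Sum>k<d. f (m + k))"
  by (induction d) (simp_all add: add_ac)

lemma sum_reindex_support:
  fixes h :: "nat \<Rightarrow> 'b::comm_monoid_add"
  assumes inj: "inj_on a {..<m}" and aq: "\<forall>j<m. a j < q"
    and z: "\<And>t. t \<notin> a ` {..<m} \<Longrightarrow> h t = 0"
  shows "(\<Sum>t<q. h t) = (\<Sum>j<m. h (a j))"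
proof -
  have "(\<Sum>t<q. h t) = (\<Sum>t\<in>a ` {..<m}. h t)"
    using aq z by (intro sum.mono_neutral_right) auto
  also have "\<dots> = (\<Sum>j<m. h (a j))"
    using inj by (simp add: sum.reindex)
  finally show ?thesis .
qed

lemma main_bound:
  assumes q2: "q \<ge> 2" and m: "0 < m" "m < q" and inj: "inj_on a {..<m}" and aq: "\<forall>j<m. a j < q"
  shows "(\<Sum>j<m. (cmod (v j))^2)
     \<le> real q ^ (2 * (q - m) + 3) * (\<Sum>i<m. (cmod (\<Sum>j<m. v j * omega q ^ (a j * i)))^2)"
proof -
  define d where "d = q - m"
  have qmd: "q = m + d" and d1: "d \<ge> 1" using m unfolding d_def by auto
  define S where "S = a ` {..<m}"
  define x where "x t = (if t \<in> S then v (the_inv_into {..<m} a t) else 0)" for t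
  have xa: "x (a j) = v j" if "j < m" for j
    using that inj by (simp add: x_def S_def the_inv_into_f_f)
  define Y where "Y = DFT q x"
  have Yeq: "Y i = (\<Sum>j<m. v j * omega q ^ (a j * i))" for i
    unfolding Y_def DFT_def
    by (subst sum_reindex_support[OF inj aq]) (auto simp: x_def S_def xa the_inv_into_f_f[OF inj] intro!: sum.cong)
  have xnorm: "(\<Sum>t<q. (cmod (x t))^2) = (\<Sum>j<m. (cmod (v j))^2)"
    by (subst sum_reindex_support[OF inj aq]) (auto simp: x_def S_def xa the_inv_into_f_f[OF inj] intro!: sum.cong)
  define H where "H = (\<Sum>i<m. (cmod (Y i))^2)"
  define T where "T = (\<Sum>k<d. (cmod (Y (m + k)))^2)"
  have H0: "H \<ge> 0" unfolding H_def by (simp add: sum_nonneg)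
  have pars: "H + T = real q * (\<Sum>j<m. (cmod (v j))^2)"
  proof -
    have p: "(\<Sum>i<q. (cmod (Y i))^2) = real q * (\<Sum>j<m. (cmod (v j))^2)"
      using parseval[OF q2, of x] xnorm by (simp add: Y_def)
    have s: "(\<Sum>i<q. (cmod (Y i))^2) = H + T"
      unfolding H_def T_def using sum_split_add[of "\<lambda>i. (cmod (Y i))^2" m d] qmd by simp
    show ?thesis using p s by simp
  qed
  have Yi: "cmod (Y i) \<le> sqrt H" if "i < m" for i
  proof -
    have "(cmod (Y i))^2 \<le> H" unfolding H_def using that
      by (intro member_le_sum) auto
    thus ?thesis by (simp add: real_le_rsqrt)
  qed
  define Z where "Z = (\<Sum>k<d. monom (Y (m + k)) k)"
  have coeffZ: "coeff Z k = Y (m + k)" if "k < d" for k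
    using that by (simp add: Z_def coeff_sum)
  have degZ: "degree Z < d"
  proof -
    have "degree Z \<le> d - 1" unfolding Z_def
      by (intro degree_sum_le) (auto intro: order.trans[OF degree_monom_le])
    thus ?thesis using d1 by simp
  qed
  define U where "U = {..<q} - S"
  have finU: "finite U" unfolding U_def by simp
  have cardS: "card S = m" unfolding S_def using inj by (simp add: card_image)
  have SU: "S \<subseteq> {..<q}" unfolding S_def using aq by auto
  have cardU: "card U = d" unfolding U_def d_def using SU cardS by (simp add: card_Diff_subset finite_subset)
  define r where "r u = cnj (omega q ^ u)" for u
  have r1: "cmod (r u) \<le> 1" for u by (simp add: r_def)
  have rdist: "2 / real q \<le> cmod (r u - r u')" if "u \<in> U" "u' \<in> U" "u \<noteq> u'" for u u'
  proof -
    have "cmod (r u - r u') = cmod (omega q ^ u - omega q ^ u')"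
      by (metis r_def complex_cnj_diff complex_mod_cnj)
    thus ?thesis using omega_dist[OF q2, of u u'] that by (simp add: U_def)
  qed
  have polyZ: "cmod (poly Z (r u)) \<le> real m * sqrt H" if u: "u \<in> U" for u
  proof -
    have xu: "x u = 0" using u by (simp add: U_def x_def)
    have uq: "u < q" using u by (simp add: U_def)
    have rp: "cnj (omega q ^ (u * i)) = r u ^ i" for i
      by (simp add: r_def power_mult complex_cnj_power)
    have "(\<Sum>i<q. Y i * r u ^ i) = 0"
      using DFT_inv[OF q2 uq, of x] xu unfolding Y_def[symmetric] rp by simp
    hence "(\<Sum>i<m. Y i * r u ^ i) + (\<Sum>k<d. Y (m + k) * r u ^ (m + k)) = 0"
      unfolding qmd sum_split_add .
    moreover have "(\<Sum>k<d. Y (m + k) * r u ^ (m + k)) = r u ^ m * poly Z (r u)"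
      by (simp add: Z_def poly_sum poly_monom sum_distrib_left power_add mult_ac)
    ultimately have e: "r u ^ m * poly Z (r u) = - (\<Sum>i<m. Y i * r u ^ i)"
      by (simp add: add_eq_0_iff)
    have nr: "cmod (r u) = 1" by (simp add: r_def)
    have "cmod (poly Z (r u)) = cmod (r u ^ m * poly Z (r u))"
      by (simp add: norm_mult norm_power nr)
    also have "\<dots> = cmod (\<Sum>i<m. Y i * r u ^ i)" using e by simp
    also have "\<dots> \<le> (\<Sum>i<m. cmod (Y i * r u ^ i))" by (rule norm_sum)
    also have "\<dots> = (\<Sum>i<m. cmod (Y i))" by (simp add: norm_mult norm_power nr)
    also have "\<dots> \<le> (\<Sum>i<m. sqrt H)" by (intro sum_mono Yi) auto
    also have "\<dots> = real m * sqrt H" by simp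
    finally show ?thesis .
  qed
  have qpos: "real q > 0" using q2 by simp
  have Ybound: "cmod (Y (m + k)) \<le> real d * real m * sqrt H * real q ^ (d - 1)" if "k < d" for k
  proof -
    have "cmod (coeff Z k) \<le> (\<Sum>u\<in>U. cmod (poly Z (r u))) * (2 / (2 / real q)) ^ (d - 1)"
      by (rule interp_bound[OF finU cardU d1 degZ r1 rdist]) (use qpos in auto)
    also have "\<dots> \<le> (\<Sum>u\<in>U. real m * sqrt H) * real q ^ (d - 1)"
    proof -
      have "(2 / (2 / real q)) = real q" using qpos by simp
      moreover have "(\<Sum>u\<in>U. cmod (poly Z (r u))) \<le> (\<Sum>u\<in>U. real m * sqrt H)"
        by (intro sum_mono polyZ)
      ultimately show ?thesis using qpos by (simp add: mult_right_mono)
    qed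
    also have "\<dots> = real d * real m * sqrt H * real q ^ (d - 1)" using cardU by simp
    finally show ?thesis using coeffZ[OF that] by simp
  qed
  have "T \<le> (\<Sum>k<d. (real d * real m * sqrt H * real q ^ (d - 1))^2)"
    unfolding T_def by (intro sum_mono power_mono Ybound) auto
  also have "\<dots> = real d ^ 3 * real m ^ 2 * H * (real q ^ (d - 1))^2"
    using H0 by (simp add: power_mult_distrib power3_eq_cube power2_eq_square)
  also have "\<dots> \<le> real q ^ 3 * real q ^ 2 * H * (real q ^ (d - 1))^2"
    using H0 qmd by (intro mult_right_mono mult_mono power_mono) auto
  also have "\<dots> = real q ^ (2 * d + 3) * H"
  proof -
    have e: "2 * d + 3 = (d - 1) + (d - 1) + 3 + 2" using d1 by simp
    show ?thesis unfolding e power_add power2_eq_square by (simp only: mult_ac)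
  qed
  finally have Tb: "T \<le> real q ^ (2 * d + 3) * H" .
  have q1: "1 \<le> real q ^ (2 * d + 3)" using q2 by (intro one_le_power) simp
  have "real q * (\<Sum>j<m. (cmod (v j))^2) \<le> 2 * real q ^ (2 * d + 3) * H"
  proof -
    have "H \<le> real q ^ (2 * d + 3) * H" using mult_right_mono[OF q1 H0] by simp
    thus ?thesis using pars Tb by linarith
  qed
  also have "\<dots> \<le> real q * (real q ^ (2 * d + 3) * H)"
  proof -
    have "0 \<le> real q ^ (2 * d + 3) * H" using H0 by simp
    from mult_right_mono[OF _ this, of 2 "real q"] q2 show ?thesis by (simp add: mult.assoc)
  qed
  finally have "(\<Sum>j<m. (cmod (v j))^2) \<le> real q ^ (2 * d + 3) * H"
    using qpos by simp
  thus ?thesis unfolding H_def d_def Yeq .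
qed



lemma vec_2norm_zero [simp]: "vec_2norm (0\<^sub>v n) = 0"
  by (simp add: vec_2norm_def)

lemma vec_2norm_nonneg: "0 \<le> vec_2norm v"
  by (simp add: vec_2norm_def sum_nonneg)

lemma spec_norm_bound:
  assumes c: "0 \<le> c"
    and b: "\<And>v. v \<in> carrier_vec (dim_col A) \<Longrightarrow> vec_2norm (A *\<^sub>v v) \<le> c * vec_2norm v"
  shows "spec_norm A \<le> c" "0 \<le> spec_norm A"
proof -
  define X where "X = {vec_2norm (A *\<^sub>v v) | v. v \<in> carrier_vec (dim_col A) \<and> vec_2norm v \<le> 1}"
  have ub: "x \<le> c" if xX: "x \<in> X" for x
  proof -
    obtain v where v: "v \<in> carrier_vec (dim_col A)" "vec_2norm v \<le> 1" and x: "x = vec_2norm (A *\<^sub>v v)"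
      using xX unfolding X_def by blast
    have "x \<le> c * vec_2norm v" using b[OF v(1)] x by simp
    also have "\<dots> \<le> c * 1" using v(2) c by (intro mult_left_mono) auto
    finally show ?thesis by simp
  qed
  have z: "0 \<in> X"
  proof -
    have "vec_2norm (A *\<^sub>v 0\<^sub>v (dim_col A)) = 0"
      using b[of "0\<^sub>v (dim_col A)"] vec_2norm_nonneg[of "A *\<^sub>v 0\<^sub>v (dim_col A)"] by simp
    thus ?thesis unfolding X_def by force
  qed
  have "Sup X \<le> c" using z ub by (intro cSup_least) auto
  thus "spec_norm A \<le> c" by (simp add: spec_norm_def X_def)
  have "0 \<le> Sup X" using z ub by (intro cSup_upper) (auto simp: bdd_above_def)
  thus "0 \<le> spec_norm A" by (simp add: spec_norm_def X_def)
qed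

lemma vec_2norm_le_sq:
  assumes "(\<Sum>i<dim_vec v. (cmod (v $ i))^2) \<le> K^2 * (\<Sum>i<dim_vec w. (cmod (w $ i))^2)" "0 \<le> K"
  shows "vec_2norm v \<le> K * vec_2norm w"
proof -
  have "vec_2norm v \<le> sqrt (K^2 * (\<Sum>i<dim_vec w. (cmod (w $ i))^2))"
    unfolding vec_2norm_def using assms(1) by (rule real_sqrt_le_mono)
  also have "\<dots> = K * vec_2norm w" using assms(2) by (simp add: vec_2norm_def real_sqrt_mult)
  finally show ?thesis .
qed

lemma vec_2norm_eq0: "vec_2norm v = 0 \<Longrightarrow> v = 0\<^sub>v (dim_vec v)"
proof -
  assume h: "vec_2norm v = 0"
  hence "(\<Sum>i<dim_vec v. (cmod (v $ i))^2) = 0" unfolding vec_2norm_def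
    by (simp add: sum_nonneg)
  hence "\<forall>i\<in>{..<dim_vec v}. (cmod (v $ i))^2 = 0" by (subst (asm) sum_nonneg_eq_0_iff) auto
  thus ?thesis by (intro eq_vecI) auto
qed



lemma vand_case:
  assumes q2: "q \<ge> 2" and m: "0 < m" "m < q" and inj: "inj_on s {..<m}"
    and sq: "\<forall>j<m. s j \<in> {omega q ^ k | k. k < q}"
  shows "cond_num (vandermonde m s) \<le> ereal (real q ^ (q - m + 4))"
proof -
  define d where "d = q - m"
  define a where "a j = (SOME k. k < q \<and> s j = omega q ^ k)" for j
  have a: "a j < q \<and> s j = omega q ^ a j" if "j < m" for j
    using sq that unfolding a_def by (metis (mono_tags, lifting) mem_Collect_eq someI_ex)
  have aq: "\<forall>j<m. a j < q" using a by blast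
  have ainj: "inj_on a {..<m}"
  proof (rule inj_onI)
    fix i j assume "i \<in> {..<m}" "j \<in> {..<m}" "a i = a j"
    hence "s i = s j" using a[of i] a[of j] by auto
    thus "i = j" using inj \<open>i \<in> {..<m}\<close> \<open>j \<in> {..<m}\<close> by (auto simp: inj_on_def)
  qed
  define V where "V = vandermonde m s"
  have Vc: "V \<in> carrier_mat m m" by (simp add: V_def vandermonde_def)
  have Vv: "(V *\<^sub>v v) $ i = (\<Sum>j<m. v $ j * omega q ^ (a j * i))"
    if "i < m" "v \<in> carrier_vec m" for v i
  proof -
    have "(V *\<^sub>v v) $ i = (\<Sum>j\<in>{0..<m}. V $$ (i, j) * v $ j)"
      using that Vc by (simp add: scalar_prod_def)
    also have "\<dots> = (\<Sum>j<m. v $ j * omega q ^ (a j * i))"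
      using that a by (intro sum.cong) (auto simp: V_def vandermonde_def power_mult[symmetric] mult.commute)
    finally show ?thesis .
  qed
  define K where "K = real q ^ (d + 2)"
  have K0: "0 \<le> K" by (simp add: K_def)
  have lower: "vec_2norm v \<le> K * vec_2norm (V *\<^sub>v v)" if v: "v \<in> carrier_vec m" for v
  proof (rule vec_2norm_le_sq[OF _ K0])
    have dv: "dim_vec v = m" "dim_vec (V *\<^sub>v v) = m" using v Vc by auto
    have "(\<Sum>j<m. (cmod (v $ j))^2)
       \<le> real q ^ (2 * (q - m) + 3) * (\<Sum>i<m. (cmod (\<Sum>j<m. v $ j * omega q ^ (a j * i)))^2)"
      by (rule main_bound[OF q2 m ainj aq])
    also have "\<dots> = real q ^ (2 * d + 3) * (\<Sum>i<m. (cmod ((V *\<^sub>v v) $ i))^2)"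
      using Vv[OF _ v] by (simp add: d_def)
    also have "\<dots> \<le> K^2 * (\<Sum>i<m. (cmod ((V *\<^sub>v v) $ i))^2)"
    proof (intro mult_right_mono sum_nonneg)
      have "real q ^ (2 * d + 3) \<le> real q ^ (2 * d + 4)" using q2 by (intro power_increasing) auto
      also have "\<dots> = K^2"
      proof -
        have "2 * d + 4 = (d + 2) * 2" by simp
        thus ?thesis unfolding K_def by (simp only: power_mult)
      qed
      finally show "real q ^ (2 * d + 3) \<le> K^2" .
    qed auto
    finally show "(\<Sum>i<dim_vec v. (cmod (v $ i))^2) \<le> K^2 * (\<Sum>i<dim_vec (V *\<^sub>v v). (cmod ((V *\<^sub>v v) $ i))^2)"
      using dv by simp
  qed
  have upper: "vec_2norm (V *\<^sub>v v) \<le> real q ^ 2 * vec_2norm v" if v: "v \<in> carrier_vec m" for v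
  proof (rule vec_2norm_le_sq)
    have dv: "dim_vec v = m" "dim_vec (V *\<^sub>v v) = m" using v Vc by auto
    define N where "N = (\<Sum>j<m. (cmod (v $ j))^2)"
    have vj: "cmod (v $ j) \<le> sqrt N" if "j < m" for j
    proof -
      have "(cmod (v $ j))^2 \<le> N" unfolding N_def using that by (intro member_le_sum) auto
      thus ?thesis by (simp add: real_le_rsqrt)
    qed
    have N0: "0 \<le> N" unfolding N_def by (simp add: sum_nonneg)
    have ent: "(cmod ((V *\<^sub>v v) $ i))^2 \<le> real m ^ 2 * N" if "i < m" for i
    proof -
      have "cmod ((V *\<^sub>v v) $ i) \<le> (\<Sum>j<m. cmod (v $ j * omega q ^ (a j * i)))"
        unfolding Vv[OF that v] by (rule norm_sum)
      also have "\<dots> = (\<Sum>j<m. cmod (v $ j))" by (simp add: norm_mult)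
      also have "\<dots> \<le> (\<Sum>j<m. sqrt N)" by (intro sum_mono vj) auto
      finally have "cmod ((V *\<^sub>v v) $ i) \<le> real m * sqrt N" by simp
      hence "(cmod ((V *\<^sub>v v) $ i))^2 \<le> (real m * sqrt N)^2" by (intro power_mono) auto
      thus ?thesis using N0 by (simp add: power_mult_distrib)
    qed
    have "(\<Sum>i<m. (cmod ((V *\<^sub>v v) $ i))^2) \<le> (\<Sum>i<m. real m ^ 2 * N)"
      by (intro sum_mono ent) auto
    also have "\<dots> = real m ^ 3 * N" by (simp add: power3_eq_cube power2_eq_square)
    also have "\<dots> \<le> real q ^ 4 * N"
    proof (intro mult_right_mono N0)
      have "real m ^ 3 \<le> real q ^ 3" using m by (intro power_mono) auto
      also have "\<dots> \<le> real q ^ 4" using q2 by (intro power_increasing) auto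
      finally show "real m ^ 3 \<le> real q ^ 4" .
    qed
    also have "\<dots> = (real q ^ 2)^2 * N" by (simp flip: power_mult)
    finally show "(\<Sum>i<dim_vec (V *\<^sub>v v). (cmod ((V *\<^sub>v v) $ i))^2) \<le> (real q ^ 2)^2 * (\<Sum>i<dim_vec v. (cmod (v $ i))^2)"
      using dv N_def by simp
  qed simp
  have "det V \<noteq> 0"
  proof
    assume "det V = 0"
    then obtain v where v: "v \<in> carrier_vec m" "v \<noteq> 0\<^sub>v m" "V *\<^sub>v v = 0\<^sub>v m"
      using det_0_iff_vec_prod_zero[OF Vc] by blast
    have "vec_2norm v \<le> 0" using lower[OF v(1)] v(3) by simp
    hence "vec_2norm v = 0" using vec_2norm_nonneg[of v] by simp
    hence "v = 0\<^sub>v m" using vec_2norm_eq0 v(1) by force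
    thus False using v(2) by simp
  qed
  from det_non_zero_imp_unit[OF Vc this, unfolded Units_def, of "()"]
  obtain B where B: "B \<in> carrier_mat m m" and BV: "B * V = 1\<^sub>m m" and VB: "V * B = 1\<^sub>m m"
    by (auto simp: ring_mat_def)
  define P where "P B' = (B' \<in> carrier_mat (dim_row V) (dim_row V) \<and> inverts_mat V B' \<and> inverts_mat B' V)" for B'
  have PB: "P B" using B BV VB Vc by (auto simp: P_def inverts_mat_def)
  have Puniq: "B' = B" if "P B'" for B'
  proof -
    have B': "B' \<in> carrier_mat m m" "B' * V = 1\<^sub>m m" using that Vc by (auto simp: P_def inverts_mat_def)
    have "B' = B' * (V * B)" using B' by (simp add: VB)
    also have "\<dots> = (B' * V) * B" by (rule sym, rule assoc_mult_mat[OF B'(1) Vc B])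
    also have "\<dots> = B" using B' B by simp
    finally show ?thesis .
  qed
  have inv: "invertible_mat V" using B BV VB Vc
    by (auto simp: invertible_mat_def inverts_mat_def square_mat.simps)
  have theB: "(THE B'. P B') = B" by (rule the_equality[of P B, OF PB Puniq])
  have cn: "cond_num V = ereal (spec_norm V * spec_norm B)"
  proof -
    have "cond_num V = ereal (spec_norm V * spec_norm (THE B'. P B'))"
      unfolding cond_num_def P_def by (simp only: inv if_True)
    thus ?thesis by (simp only: theB)
  qed
  have sB: "spec_norm B \<le> K" "0 \<le> spec_norm B"
  proof -
    have "vec_2norm (B *\<^sub>v w) \<le> K * vec_2norm w" if w: "w \<in> carrier_vec (dim_col B)" for w
    proof -
      have wm: "w \<in> carrier_vec m" using w B by simp
      have u: "B *\<^sub>v w \<in> carrier_vec m" using B wm by simp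
      have "V *\<^sub>v (B *\<^sub>v w) = (V * B) *\<^sub>v w" by (rule assoc_mult_mat_vec[symmetric, OF Vc B wm])
      also have "\<dots> = w" using wm by (simp add: VB)
      finally have "V *\<^sub>v (B *\<^sub>v w) = w" .
      thus ?thesis using lower[OF u] by simp
    qed
    thus "spec_norm B \<le> K" "0 \<le> spec_norm B" using spec_norm_bound[OF K0, of B] by blast+
  qed
  have sV: "spec_norm V \<le> real q ^ 2"
  proof (rule spec_norm_bound(1))
    fix v :: "complex vec" assume "v \<in> carrier_vec (dim_col V)"
    thus "vec_2norm (V *\<^sub>v v) \<le> real q ^ 2 * vec_2norm v" using upper Vc by simp
  qed simp
  have "spec_norm V * spec_norm B \<le> real q ^ 2 * K"
    using sV sB by (intro mult_mono) auto
  also have "\<dots> = real q ^ (q - m + 4)" unfolding K_def d_def by (simp only: power_add[symmetric] add.commute add.left_commute) simp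
  finally show ?thesis unfolding V_def[symmetric] cn by simp
qed


theorem theorem1:
  shows "\<exists>C::real. \<forall>(q::nat) (m::nat) (s::nat \<Rightarrow> complex).
     odd q \<and> 0 < m \<and> m < q \<and> inj_on s {..<m}
     \<and> (\<forall>j<m. s j \<in> {omega q ^ k | k. k < q})
     \<longrightarrow> cond_num (vandermonde m s) \<le> ereal (C * real q powr (real q - real m + 5.5))"
proof (intro exI[of _ 1] allI impI)
  fix q m :: nat and s :: "nat \<Rightarrow> complex"
  assume h: "odd q \<and> 0 < m \<and> m < q \<and> inj_on s {..<m} \<and> (\<forall>j<m. s j \<in> {omega q ^ k | k. k < q})"
  hence q2: "q \<ge> 2" by auto
  have "cond_num (vandermonde m s) \<le> ereal (real q ^ (q - m + 4))"
    using vand_case[OF q2] h by blast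
  also have "real q ^ (q - m + 4) = real q powr (real (q - m + 4))"
    using q2 by (subst powr_realpow) auto
  also have "real q powr (real (q - m + 4)) \<le> real q powr (real q - real m + 5.5)"
    using q2 h by (intro powr_mono) (auto simp: of_nat_diff)
  finally show "cond_num (vandermonde m s) \<le> ereal (1 * real q powr (real q - real m + 5.5))"
    by simp
qed

end
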